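(* Let $l\ge1$, let $f\in M_{2l}(SL(2,\mathbb Z))$ be a modular form of weight $2l$, and let $\mu$ be a partition of $n$ with $p(\mu)=l$. For partitions $\mu'$ of $n$ with $p(\mu')\ge l$ put $c_\mu=1$ and $c_{\mu'}=t^\mu_{\mu'}\prod_{t=0}^{p(\mu')-l-1}(2l+t)^{-1}$ for $p(\mu')>l$. Then the element \[ F(b)=\sum_{\mu':\,|\mu'|=n,\ p(\mu')\ge l}c_{\mu'}\,b_{-\mu'}\,f^{(p(\mu')-l)}(b)\in\mathscr D^{ch}(\mathbb H), \] whose term with $\mu'=\mu$ is $b_{-\mu}f(b)$, satisfies $\pi(g)F(b)=F(b)$ for all $g\in SL(2,\mathbb Z)$.
   Context: Let $\mathbb H$ be the upper half plane and $\mathcal O(\mathbb H)$ its ring of holomorphic functions. Let $V=\mathbb C[a_{-1},a_{-2},\dots,b_0,b_{-1},\dots]$ be the vacuum module of the Heisenberg Lie algebra $[a_m,b_n]=\delta_{m,-n}C$ (with $a_m1=0$ for $m\ge0$, $b_n1=0$ for $n>0$, $C=1$), a vertex algebra with fields $a(z)=\sum a_nz^{-n-1}$, $b(z)=\sum b_nz^{-n}$. Let $\mathscr D^{ch}(\mathbb H)=V\otimes_{\mathbb C[b_0]}\mathcal O(\mathbb H)$ ($b_0\mapsto\tau$, $b=b_0$), with $Y(f,z)=\sum_{i\ge0}\frac{f^{(i)}(b)}{i!}(\sum_{n\ne0}b_nz^{-n})^i$ for $f\in\mathcal O(\mathbb H)$. For a partition $\mu=(\mu_{(1)}\ge\dots\ge\mu_{(d)}\ge1)$,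 $p(\mu)=d$, $|\mu|=\sum\mu_{(i)}$ and $b_{-\mu}=b_{-\mu_{(1)}}\cdots b_{-\mu_{(d)}}$; $f^{(s)}$ is the $s$-th derivative. $SL(2,\mathbb R)$ acts on the right by vertex algebra automorphisms $\pi(g)$, integrating the zero modes of $E=-a_{-1}$, $F=a_{-1}b_0^2+2b_{-1}$, $H=-2a_{-1}b_0$ via $\pi(e^x)=\exp(-x_{(0)})$; for $g=\begin{pmatrix}\alpha&\beta\\\gamma&\delta\end{pmatrix}$, $\pi(g)a_{-1}=a_{-1}(\gamma b+\delta)^2+2\gamma^2b_{-1}$ and $\pi(g)f(b)=f(\frac{\alpha b+\beta}{\gamma b+\delta})$. For each partition $\mu$ there are unique constants $t^\mu_\nu$ (for partitions $\nu$ with $|\nu|=|\mu|$, $p(\nu)\ge p(\mu)$), independent of $g$, such that for all $g\in SL(2,\mathbb R)$, $\pi(g)(b_{-\mu}\cdot1)=\sum_{\nu:\,p(\nu)\ge p(\mu)}t^\mu_\nu(-\gamma)^{p(\nu)-p(\mu)}b_{-\nu}(\gamma b+\delta)^{-p(\mu)-p(\nu)}$. $M_{2l}(SL(2,\mathbb Z))$ is the space of holomorphic modular forms of weight $2l$ for $SL(2,\mathbb Z)$. *)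

theory Defs
  imports "HOL-Complex_Analysis.Complex_Analysis" "HOL-Library.Multiset"
begin

definition UHP :: "complex set" where
  "UHP = {z. Im z > 0}"

definition moeb :: "real \<Rightarrow> real \<Rightarrow> real \<Rightarrow> real \<Rightarrow> complex \<Rightarrow> complex" where
  "moeb a b c d z = (of_real a * z + of_real b) / (of_real c * z + of_real d)"

(* partitions = finite multisets of positive integers; |nu| = sum_mset nu, p(nu) = size nu *)
definition is_partition :: "nat multiset \<Rightarrow> bool" where
  "is_partition \<nu> \<longleftrightarrow> 0 \<notin># \<nu>"

definition modular_form :: "nat \<Rightarrow> (complex \<Rightarrow> complex) \<Rightarrow> bool" where
  "modular_form k f \<longleftrightarrow>
     f holomorphic_on UHP \<and>
     (\<forall>a b c d :: int. a * d - b * c = 1 \<longrightarrow>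
        (\<forall>z\<in>UHP. f (moeb (of_int a) (of_int b) (of_int c) (of_int d) z)
                    = (of_int c * z + of_int d) ^ k * f z)) \<and>
     (\<exists>M. \<forall>z. 1 \<le> Im z \<longrightarrow> norm (f z) \<le> M)"

(* Elements of the subalgebra of D^ch(H) spanned by the b_{-nu} f(b):
   X nu is the holomorphic coefficient of b_{-nu}, i.e. X = sum_nu b_{-nu} (X nu)(b). *)
type_synonym elt = "nat multiset \<Rightarrow> complex \<Rightarrow> complex"

definition unitE :: elt where
  "unitE \<nu> z = (if \<nu> = {#} then 1 else 0)"

(* product in the commutative algebra generated by the b_{-n} over O(H) *)
definition multE :: "elt \<Rightarrow> elt \<Rightarrow> elt" where
  "multE X Y \<nu> z = (\<Sum>A\<in>{A. A \<subseteq># \<nu>}. X A z * Y (\<nu> - A) z)"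

definition bmono :: "nat multiset \<Rightarrow> elt" where
  "bmono \<mu> \<nu> z = (if \<nu> = \<mu> then 1 else 0)"

(* pi(g)(b_{-j} 1) = T^j(pi(g) b)/j! = coefficient of z^j in
   Y(phi(b),z)1 = sum_i phi^(i)(b)/i! (sum_{m>0} b_{-m} z^m)^i, phi = Moebius map of g *)
definition bmode_image :: "real \<Rightarrow> real \<Rightarrow> real \<Rightarrow> real \<Rightarrow> nat \<Rightarrow> elt" where
  "bmode_image a b c d j \<nu> z =
     (if is_partition \<nu> \<and> \<nu> \<noteq> {#} \<and> sum_mset \<nu> = j
      then (deriv ^^ size \<nu>) (moeb a b c d) z /
           (\<Prod>k\<in>set_mset \<nu>. of_nat (fact (count \<nu> k)))
      else 0)"

(* pi(g)(b_{-mu} 1) = product of the pi(g)(b_{-mu_i} 1) *)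
definition bmono_image :: "real \<Rightarrow> real \<Rightarrow> real \<Rightarrow> real \<Rightarrow> nat multiset \<Rightarrow> elt" where
  "bmono_image a b c d \<mu> =
     foldr (\<lambda>j X. multE (bmode_image a b c d j) X) (sorted_list_of_multiset \<mu>) unitE"

(* pi(g) on the subalgebra: pi(g)(sum_rho b_{-rho} h_rho(b)) = sum_rho pi(g)(b_{-rho}1) h_rho(g b);
   pi(g) preserves conformal weight |rho| *)
definition piD :: "real \<Rightarrow> real \<Rightarrow> real \<Rightarrow> real \<Rightarrow> elt \<Rightarrow> elt" where
  "piD a b c d X \<nu> z =
     (\<Sum>\<rho>\<in>{\<rho>. is_partition \<rho> \<and> sum_mset \<rho> = sum_mset \<nu>}.
        bmono_image a b c d \<rho> \<nu> z * X \<rho> (moeb a b c d z))"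

definition tcoef :: "nat multiset \<Rightarrow> nat multiset \<Rightarrow> complex" where
  "tcoef \<mu> = (THE t.
     (\<forall>\<nu>. \<not> (is_partition \<nu> \<and> sum_mset \<nu> = sum_mset \<mu> \<and> size \<mu> \<le> size \<nu>) \<longrightarrow> t \<nu> = 0) \<and>
     (\<forall>a b c d :: real. a * d - b * c = 1 \<longrightarrow>
        (\<forall>\<nu>. \<forall>z\<in>UHP. piD a b c d (bmono \<mu>) \<nu> z =
           (if is_partition \<nu> \<and> sum_mset \<nu> = sum_mset \<mu> \<and> size \<mu> \<le> size \<nu>
            then t \<nu> * (- of_real c) ^ (size \<nu> - size \<mu>)
                 / (of_real c * z + of_real d) ^ (size \<mu> + size \<nu>)
            else 0))))"

definition ccoef :: "nat \<Rightarrow> nat multiset \<Rightarrow> nat multiset \<Rightarrow> complex" where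
  "ccoef l \<mu> \<nu> = (if \<nu> = \<mu> then 1
     else tcoef \<mu> \<nu> * (\<Prod>t<size \<nu> - l. 1 / of_nat (2 * l + t)))"

definition Fel :: "nat \<Rightarrow> (complex \<Rightarrow> complex) \<Rightarrow> nat multiset \<Rightarrow> elt" where
  "Fel l f \<mu> \<nu> z =
     (if is_partition \<nu> \<and> sum_mset \<nu> = sum_mset \<mu> \<and> l \<le> size \<nu>
      then ccoef l \<mu> \<nu> * (deriv ^^ (size \<nu> - l)) f z else 0)"

end

theory Submission
  imports Defs "HOL-Library.Poly_Mapping"
begin


type_synonym pm = "nat multiset \<Rightarrow>\<^sub>0 complex"

abbreviation lk :: "('a \<Rightarrow>\<^sub>0 'b::zero) \<Rightarrow> 'a \<Rightarrow> 'b" where "lk \<equiv> Poly_Mapping.lookup"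
abbreviation sg :: "'a \<Rightarrow> 'b \<Rightarrow> ('a \<Rightarrow>\<^sub>0 'b::zero)" where "sg \<equiv> Poly_Mapping.single"
abbreviation ks :: "('a \<Rightarrow>\<^sub>0 'b::zero) \<Rightarrow> 'a set" where "ks \<equiv> Poly_Mapping.keys"

lemma size_le_sum_mset: "0 \<notin># \<nu> \<Longrightarrow> size \<nu> \<le> sum_mset (\<nu>::nat multiset)"
  by (induction \<nu>) (auto simp: Suc_le_eq)

lemma finite_msets_bounded:
  "finite {\<nu>::'a multiset. set_mset \<nu> \<subseteq> A \<and> size \<nu> \<le> k}" if "finite A"
proof -
  have "{\<nu>::'a multiset. set_mset \<nu> \<subseteq> A \<and> size \<nu> \<le> k} \<subseteq> mset ` {xs. set xs \<subseteq> A \<and> length xs \<le> k}"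
  proof
    fix \<nu> assume "\<nu> \<in> {\<nu>::'a multiset. set_mset \<nu> \<subseteq> A \<and> size \<nu> \<le> k}"
    moreover obtain xs where "mset xs = \<nu>" using ex_mset by blast
    ultimately show "\<nu> \<in> mset ` {xs. set xs \<subseteq> A \<and> length xs \<le> k}" by auto
  qed
  moreover have "finite (mset ` {xs. set xs \<subseteq> A \<and> length xs \<le> k})"
    using finite_lists_length_le[OF that] by simp
  ultimately show ?thesis by (rule finite_subset)
qed

lemma finite_partitions: "finite {\<nu>. is_partition \<nu> \<and> sum_mset \<nu> = n}"
proof -
  have "{\<nu>. is_partition \<nu> \<and> sum_mset \<nu> = n} \<subseteq> {\<nu>. set_mset \<nu> \<subseteq> {0..n} \<and> size \<nu> \<le> n}"
    using size_le_sum_mset by (auto simp: is_partition_def dest: multi_member_split)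
  then show ?thesis using finite_msets_bounded[of "{0..n}" n] finite_subset by blast
qed

lemma finite_submsets: "finite {A. A \<subseteq># (\<nu>::'a multiset)}"
proof -
  have "{A. A \<subseteq># \<nu>} \<subseteq> {A. set_mset A \<subseteq> set_mset \<nu> \<and> size A \<le> size \<nu>}"
    by (auto simp: size_mset_mono mset_subset_eqD)
  then show ?thesis using finite_msets_bounded[of "set_mset \<nu>" "size \<nu>"] finite_subset by blast
qed

lemma lookup_mult_mset:
  fixes X Y :: pm
  shows "lk (X * Y) \<nu> = (\<Sum>A\<in>{A. A \<subseteq># \<nu>}. lk X A * lk Y (\<nu> - A))"
proof -
  have inner: "(\<Sum>q. (lk Y q when \<nu> = l + q)) = (lk Y (\<nu> - l) when l \<subseteq># \<nu>)" for l
  proof (cases "l \<subseteq># \<nu>")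
    case True
    have "\<And>q. (\<nu> = l + q) = (q = \<nu> - l)" using True by (auto simp: subset_mset.add_diff_inverse)
    then show ?thesis using True by simp
  next
    case False
    have "\<And>q. \<nu> \<noteq> l + q" using False by auto
    then show ?thesis using False by simp
  qed
  have "lk (X * Y) \<nu> = (\<Sum>l. lk X l * (lk Y (\<nu> - l) when l \<subseteq># \<nu>))"
    by (simp only: lookup_mult inner)
  also have "\<dots> = (\<Sum>l. (lk X l * lk Y (\<nu> - l) when l \<in> {A. A \<subseteq># \<nu>}))"
    by (simp add: mult_when)
  also have "\<dots> = (\<Sum>A\<in>{A. A \<subseteq># \<nu>}. lk X A * lk Y (\<nu> - A))"
    by (simp add: Sum_any.conditionalize[OF finite_submsets] when_def)
  finally show ?thesis .
qed




definition Nc :: "nat multiset \<Rightarrow> complex" where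
  "Nc \<nu> = of_nat (fact (size \<nu>)) / (\<Prod>k\<in>set_mset \<nu>. of_nat (fact (count \<nu> k)))"

lemma Nc_single: "Nc {#m#} = 1"
  by (simp add: Nc_def)

lemma prod_fact_remove:
  assumes "m \<in># \<nu>"
  shows "(\<Prod>k\<in>set_mset (\<nu> - {#m#}). (of_nat (fact (count (\<nu> - {#m#}) k)) :: complex)) * of_nat (count \<nu> m)
         = (\<Prod>k\<in>set_mset \<nu>. of_nat (fact (count \<nu> k)))"
proof -
  have sub: "set_mset (\<nu> - {#m#}) \<subseteq> set_mset \<nu>" by (meson in_diffD subsetI)
  have "(\<Prod>k\<in>set_mset (\<nu> - {#m#}). (of_nat (fact (count (\<nu> - {#m#}) k)) :: complex))
      = (\<Prod>k\<in>set_mset \<nu>. of_nat (fact (count (\<nu> - {#m#}) k)))"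
    by (rule prod.mono_neutral_left) (auto simp: sub not_in_iff)
  also have "\<dots> = of_nat (fact (count \<nu> m - 1)) * (\<Prod>k\<in>set_mset \<nu> - {m}. of_nat (fact (count \<nu> k)))"
  proof -
    have "(\<Prod>k\<in>set_mset \<nu> - {m}. (of_nat (fact (count (\<nu> - {#m#}) k)) :: complex))
        = (\<Prod>k\<in>set_mset \<nu> - {m}. of_nat (fact (count \<nu> k)))"
      by (rule prod.cong) auto
    then show ?thesis using assms by (subst prod.remove[of _ m]) auto
  qed
  finally have "(\<Prod>k\<in>set_mset (\<nu> - {#m#}). (of_nat (fact (count (\<nu> - {#m#}) k)) :: complex)) * of_nat (count \<nu> m)
     = (of_nat (count \<nu> m) * of_nat (fact (count \<nu> m - 1))) * (\<Prod>k\<in>set_mset \<nu> - {m}. of_nat (fact (count \<nu> k)))"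
    by (simp add: algebra_simps)
  also have "of_nat (count \<nu> m) * of_nat (fact (count \<nu> m - 1)) = (of_nat (fact (count \<nu> m)) :: complex)"
  proof -
    have "fact (count \<nu> m) = (of_nat (count \<nu> m) * fact (count \<nu> m - 1) :: complex)"
      by (rule fact_reduce) (use assms in auto)
    then show ?thesis by simp
  qed
  also have "\<dots> * (\<Prod>k\<in>set_mset \<nu> - {m}. of_nat (fact (count \<nu> k))) = (\<Prod>k\<in>set_mset \<nu>. of_nat (fact (count \<nu> k)))"
    using assms by (subst (2) prod.remove[of _ m]) auto
  finally show ?thesis .
qed

lemma Nc_rec:
  assumes "\<nu> \<noteq> {#}"
  shows "Nc \<nu> = (\<Sum>m\<in>set_mset \<nu>. Nc (\<nu> - {#m#}))"
proof -
  define P where "P = (\<Prod>k\<in>set_mset \<nu>. (of_nat (fact (count \<nu> k)) :: complex))"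
  have P0: "P \<noteq> 0" unfolding P_def by (simp add: prod_zero_iff)
  have p: "size \<nu> \<ge> 1" using assms by (simp add: Suc_le_eq nonempty_has_size)
  have "Nc (\<nu> - {#m#}) = of_nat (fact (size \<nu> - 1)) * of_nat (count \<nu> m) / P" if "m \<in># \<nu>" for m
  proof -
    have "(\<Prod>k\<in>set_mset (\<nu> - {#m#}). (of_nat (fact (count (\<nu> - {#m#}) k)) :: complex)) = P / of_nat (count \<nu> m)"
      using prod_fact_remove[OF that] that unfolding P_def
      by (simp add: field_simps)
    then show ?thesis using that P0 unfolding Nc_def by (simp add: size_Diff_submset field_simps)
  qed
  then have "(\<Sum>m\<in>set_mset \<nu>. Nc (\<nu> - {#m#})) = (\<Sum>m\<in>set_mset \<nu>. of_nat (fact (size \<nu> - 1)) * of_nat (count \<nu> m) / P)"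
    by (intro sum.cong) auto
  also have "\<dots> = of_nat (fact (size \<nu> - 1)) * of_nat (\<Sum>m\<in>set_mset \<nu>. count \<nu> m) / P"
    by (simp add: sum_divide_distrib sum_distrib_left)
  also have "(\<Sum>m\<in>set_mset \<nu>. count \<nu> m) = size \<nu>"
    by (simp add: size_multiset_overloaded_eq)
  also have "of_nat (fact (size \<nu> - 1)) * of_nat (size \<nu>) = (of_nat (fact (size \<nu>)) :: complex)"
  proof -
    have "fact (size \<nu>) = (of_nat (size \<nu>) * fact (size \<nu> - 1) :: complex)"
      by (rule fact_reduce) (use p in auto)
    then show ?thesis by (simp add: mult.commute)
  qed
  finally show ?thesis unfolding Nc_def P_def by simp
qed


definition Ecf :: "complex \<Rightarrow> nat \<Rightarrow> nat multiset \<Rightarrow> complex" where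
  "Ecf s j \<nu> = (if is_partition \<nu> \<and> \<nu> \<noteq> {#} \<and> sum_mset \<nu> = j then Nc \<nu> * s ^ (size \<nu> - 1) else 0)"

lemma Ecf_fin: "finite {\<nu>. Ecf s j \<nu> \<noteq> 0}"
  by (rule finite_subset[OF _ finite_partitions[of j]]) (auto simp: Ecf_def split: if_splits)

definition E :: "complex \<Rightarrow> nat \<Rightarrow> pm" where "E s j = Abs_poly_mapping (Ecf s j)"

lemma lk_E0: "lk (E s j) = Ecf s j" by (simp add: E_def Ecf_fin)

lemma lk_E: "lk (E s j) \<nu> = Ecf s j \<nu>" by (simp add: lk_E0)

definition D :: "nat \<Rightarrow> pm" where "D m = sg {#m#} 1"

lemma lk_sc_mult: "lk (sg 0 c * P) \<nu> = c * lk (P::pm) \<nu>"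
proof -
  have "lk (sg 0 c * P) \<nu> = (\<Sum>A\<in>{A. A \<subseteq># \<nu>}. (if {#} = A then c * lk P (\<nu> - A) else 0))"
    unfolding lookup_mult_mset lookup_single when_def by (intro sum.cong) auto
  also have "\<dots> = c * lk P \<nu>" by (subst sum.delta'[OF finite_submsets]) auto
  finally show ?thesis .
qed

lemma lk_D: "lk (D j) \<nu> = (if {#j#} = \<nu> then 1 else 0)"
  by (simp add: D_def lookup_single when_def)

lemma lk_D_mult: "lk (D m * Y) \<nu> = (if m \<in># \<nu> then lk Y (\<nu> - {#m#}) else 0)"
proof -
  have "lk (D m * Y) \<nu> = (\<Sum>A\<in>{A. A \<subseteq># \<nu>}. (if {#m#} = A then lk Y (\<nu> - A) else 0))"
    unfolding lookup_mult_mset D_def lookup_single when_def by (intro sum.cong) auto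
  also have "\<dots> = (if m \<in># \<nu> then lk Y (\<nu> - {#m#}) else 0)" by (subst sum.delta'[OF finite_submsets]) auto
  finally show ?thesis .
qed

lemma sum_mset_remove: "m \<in># \<nu> \<Longrightarrow> sum_mset \<nu> = m + sum_mset (\<nu> - {#m#})"
  by (metis insert_DiffM sum_mset.add_mset)

lemma part_pos: "is_partition \<nu> \<Longrightarrow> m \<in># \<nu> \<Longrightarrow> m \<ge> 1"
  unfolding is_partition_def by (cases "m = 0") auto

lemma E_rec:
  assumes j: "j \<ge> 1"
  shows "E s j = D j + sg 0 s * (\<Sum>m\<in>{1..<j}. D m * E s (j - m))"
proof (rule poly_mapping_eqI)
  fix \<nu>
  have R: "lk (D j + sg 0 s * (\<Sum>m\<in>{1..<j}. D m * E s (j - m))) \<nu>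
    = (if {#j#} = \<nu> then 1 else 0) + s * (\<Sum>m\<in>{1..<j} \<inter> set_mset \<nu>. Ecf s (j - m) (\<nu> - {#m#}))"
    apply (simp add: lookup_add lk_sc_mult lookup_sum lk_D_mult lk_D sum.inter_restrict)
    apply (unfold lk_E0) by simp
  show "lk (E s j) \<nu> = lk (D j + sg 0 s * (\<Sum>m\<in>{1..<j}. D m * E s (j - m))) \<nu>"
  proof (cases "is_partition \<nu> \<and> \<nu> \<noteq> {#} \<and> sum_mset \<nu> = j")
    case False
    have "{#j#} \<noteq> \<nu>" using False j by (auto simp: is_partition_def)
    moreover have "Ecf s (j - m) (\<nu> - {#m#}) = 0" if "m \<in> {1..<j} \<inter> set_mset \<nu>" for m
    proof (rule ccontr)
      assume "Ecf s (j - m) (\<nu> - {#m#}) \<noteq> 0"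
      then have h: "is_partition (\<nu> - {#m#})" "sum_mset (\<nu> - {#m#}) = j - m"
        by (auto simp: Ecf_def split: if_splits)
      have nu: "\<nu> = add_mset m (\<nu> - {#m#})" using that by auto
      have "is_partition \<nu>" using h(1) that by (auto simp: is_partition_def in_diff_count)
      moreover have "sum_mset \<nu> = m + sum_mset (\<nu> - {#m#})"
          using that sum_mset_remove by auto
      then have "sum_mset \<nu> = j" using h(2) that by auto
      ultimately show False using False that by auto
    qed
    ultimately show ?thesis using R by (simp add: lk_E Ecf_def False)
  next
    case True
    then have part: "is_partition \<nu>" and ne: "\<nu> \<noteq> {#}" and sm: "sum_mset \<nu> = j" by auto
    show ?thesis
    proof (cases "size \<nu> = 1")
      case True
      then obtain x where x: "\<nu> = {#x#}" using size_1_singleton_mset by blast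
      then have "x = j" using sm by simp
      then show ?thesis using R x part by (simp add: lk_E Ecf_def Nc_single)
    next
      case False
      have p2: "size \<nu> \<ge> 2" using False ne by (cases "size \<nu>") (auto)
      have nj: "{#j#} \<noteq> \<nu>" using p2 by auto
      have facts: "is_partition (\<nu> - {#m#}) \<and> \<nu> - {#m#} \<noteq> {#} \<and> sum_mset (\<nu> - {#m#}) = j - m
          \<and> m \<in> {1..<j} \<and> size (\<nu> - {#m#}) - 1 = size \<nu> - 2" if m: "m \<in># \<nu>" for m
      proof -
        have pp: "is_partition (\<nu> - {#m#})" using part by (auto simp: is_partition_def dest: in_diffD)
        have sz: "size (\<nu> - {#m#}) = size \<nu> - 1" using m by (simp add: size_Diff_submset)
        have "size (\<nu> - {#m#}) \<le> sum_mset (\<nu> - {#m#})"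
          using pp size_le_sum_mset unfolding is_partition_def by blast
        moreover have "sum_mset \<nu> = m + sum_mset (\<nu> - {#m#})" using sum_mset_remove[OF m] .
        moreover have "m \<ge> 1" using part_pos[OF part m] .
        ultimately show ?thesis using pp sz p2 sm by (auto simp: size_eq_0_iff_empty[symmetric] simp del: size_eq_0_iff_empty)
      qed
      have setsub: "{1..<j} \<inter> set_mset \<nu> = set_mset \<nu>" using facts by auto
      have trm: "Ecf s (j - m) (\<nu> - {#m#}) = Nc (\<nu> - {#m#}) * s ^ (size \<nu> - 2)" if m: "m \<in># \<nu>" for m
        using facts[OF m] by (simp add: Ecf_def)
      have "lk (E s j) \<nu> = Nc \<nu> * s ^ (size \<nu> - 1)" by (simp add: lk_E Ecf_def True)
      also have "\<dots> = s * ((\<Sum>m\<in>set_mset \<nu>. Nc (\<nu> - {#m#})) * s ^ (size \<nu> - 2))"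
      proof -
        obtain q where q: "size \<nu> = Suc (Suc q)" using p2 by (metis add_2_eq_Suc le_Suc_ex)
        show ?thesis using Nc_rec[OF ne] by (simp add: q)
      qed
      also have "\<dots> = s * (\<Sum>m\<in>{1..<j} \<inter> set_mset \<nu>. Ecf s (j - m) (\<nu> - {#m#}))"
        unfolding setsub by (simp add: trm sum_distrib_right)
      finally show ?thesis using R nj by simp
    qed
  qed
qed




definition Tm :: "complex \<Rightarrow> nat multiset \<Rightarrow> pm" where
  "Tm s \<rho> = prod_mset (image_mset (E s) \<rho>)"

lemma Tm_empty[simp]: "Tm s {#} = 1" by (simp add: Tm_def)
lemma Tm_add: "Tm s (add_mset x \<rho>) = E s x * Tm s \<rho>" by (simp add: Tm_def)
lemma Tm_union: "Tm s (A + B) = Tm s A * Tm s B" by (simp add: Tm_def)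

definition Phi :: "complex \<Rightarrow> pm \<Rightarrow> pm" where
  "Phi t X = (\<Sum>\<rho>\<in>ks X. sg 0 (lk X \<rho>) * Tm t \<rho>)"

lemma Phi_superset:
  assumes "finite S" "ks X \<subseteq> S"
  shows "Phi t X = (\<Sum>\<rho>\<in>S. sg 0 (lk X \<rho>) * Tm t \<rho>)"
  unfolding Phi_def using assms
  by (intro sum.mono_neutral_left) (auto simp: in_keys_iff)

lemma Phi_add: "Phi t (X + Y) = Phi t X + Phi t Y"
proof -
  let ?S = "ks X \<union> ks Y"
  have "Phi t (X + Y) = (\<Sum>\<rho>\<in>?S. sg 0 (lk (X + Y) \<rho>) * Tm t \<rho>)"
    by (rule Phi_superset) (auto simp: keys_add)
  also have "\<dots> = (\<Sum>\<rho>\<in>?S. sg 0 (lk X \<rho>) * Tm t \<rho>) + (\<Sum>\<rho>\<in>?S. sg 0 (lk Y \<rho>) * Tm t \<rho>)"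
    by (simp add: lookup_add single_add distrib_right sum.distrib)
  also have "\<dots> = Phi t X + Phi t Y"
    by (simp add: Phi_superset[symmetric])
  finally show ?thesis .
qed

lemma Phi_zero[simp]: "Phi t 0 = 0" by (simp add: Phi_def)

lemma Phi_sum: "Phi t (\<Sum>i\<in>I. X i) = (\<Sum>i\<in>I. Phi t (X i))"
  by (induction I rule: infinite_finite_induct) (auto simp: Phi_add)

lemma Phi_single: "Phi t (sg a c) = sg 0 c * Tm t a"
  by (cases "c = 0") (simp_all add: Phi_def)

lemma pm_expand: "(X::pm) = (\<Sum>a\<in>ks X. sg a (lk X a))"
proof (rule poly_mapping_eqI)
  fix k
  show "lk X k = lk (\<Sum>a\<in>ks X. sg a (lk X a)) k"
    by (simp add: lookup_sum lookup_single when_def sum.delta in_keys_iff)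
qed

lemma sg0_mult: "sg 0 (a * b) = sg 0 a * (sg 0 b :: pm)"
  by (simp add: mult_single)

lemma Phi_mult: "Phi t (X * Y) = Phi t X * Phi t Y"
proof -
  have "X * Y = (\<Sum>a\<in>ks X. sg a (lk X a)) * (\<Sum>b\<in>ks Y. sg b (lk Y b))"
    by (simp flip: pm_expand)
  also have "\<dots> = (\<Sum>a\<in>ks X. \<Sum>b\<in>ks Y. sg (a + b) (lk X a * lk Y b))"
    by (simp add: sum_product mult_single)
  finally have XY: "X * Y = \<dots>" .
  have "Phi t (X * Y) = (\<Sum>a\<in>ks X. \<Sum>b\<in>ks Y. sg 0 (lk X a * lk Y b) * Tm t (a + b))"
    by (simp add: XY Phi_sum Phi_single)
  also have "\<dots> = (\<Sum>a\<in>ks X. \<Sum>b\<in>ks Y. (sg 0 (lk X a) * Tm t a) * (sg 0 (lk Y b) * Tm t b))"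
    by (simp add: Tm_union sg0_mult algebra_simps)
  also have "\<dots> = Phi t X * Phi t Y"
    by (simp add: Phi_def sum_product)
  finally show ?thesis .
qed

lemma Phi_one[simp]: "Phi t 1 = 1"
  using Phi_single[of t 0 1] by simp

lemma Phi_sc: "Phi t (sg 0 c) = sg 0 c"
  by (simp add: Phi_single)

lemma Phi_D: "Phi t (D m) = E t m"
  by (simp add: D_def Phi_single Tm_add)

lemma E_zero: "E s 0 = 0"
proof (rule poly_mapping_eqI)
  fix \<nu>
  have "Ecf s 0 \<nu> = 0"
  proof (cases "is_partition \<nu> \<and> \<nu> \<noteq> {#}")
    case True
    then obtain m where m: "m \<in># \<nu>" by auto
    then have "m \<ge> 1" using True part_pos by blast
    then have "sum_mset \<nu> \<noteq> 0" using sum_mset_remove[OF m] by auto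
    then have "\<not> (is_partition \<nu> \<and> \<nu> \<noteq> {#} \<and> sum_mset \<nu> = 0)" by blast
    then show ?thesis unfolding Ecf_def by (rule if_not_P)
  next
    case False
    then show ?thesis unfolding Ecf_def by auto
  qed
  then show "lk (E s 0) \<nu> = lk 0 \<nu>" by (simp add: lk_E)
qed

lemma double_sum_reindex:
  fixes h :: "nat \<Rightarrow> nat \<Rightarrow> nat \<Rightarrow> 'a::comm_monoid_add"
  shows "(\<Sum>m\<in>{1..<j}. \<Sum>m'\<in>{1..<m}. h m' (m - m') (j - m))
       = (\<Sum>m'\<in>{1..<j}. \<Sum>m''\<in>{1..<j - m'}. h m' m'' (j - m' - m''))"
proof -
  have "(\<Sum>m\<in>{1..<j}. \<Sum>m'\<in>{1..<m}. h m' (m - m') (j - m))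
      = (\<Sum>(m, m')\<in>Sigma {1..<j} (\<lambda>m. {1..<m}). h m' (m - m') (j - m))"
    by (rule sum.Sigma) auto
  also have "\<dots> = (\<Sum>(m', m'')\<in>Sigma {1..<j} (\<lambda>m'. {1..<j - m'}). h m' m'' (j - m' - m''))"
    by (rule sum.reindex_bij_witness[where i = "\<lambda>(a, b). (a + b, a)" and j = "\<lambda>(m, m'). (m', m - m')"])
       (auto simp: algebra_simps)
  also have "\<dots> = (\<Sum>m'\<in>{1..<j}. \<Sum>m''\<in>{1..<j - m'}. h m' m'' (j - m' - m''))"
    by (rule sum.Sigma[symmetric]) auto
  finally show ?thesis .
qed


lemma E_rec_all: "E s j = (if j = 0 then 0 else D j + sg 0 s * (\<Sum>m\<in>{1..<j}. D m * E s (j - m)))"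
  using E_rec[of j s] E_zero by auto

lemma L_lemma: "E (s + t) j = E t j + sg 0 s * (\<Sum>m\<in>{1..<j}. E t m * E (s + t) (j - m))"
proof (induction j rule: less_induct)
  case (less j)
  show ?case
  proof (cases "j = 0")
    case True then show ?thesis by (simp add: E_zero)
  next
    case False
    then have j: "j \<ge> 1" by simp
    define G where "G = E (s + t)"
    define F where "F = E t"
    define S :: pm where "S = sg 0 s"
    define T :: pm where "T = sg 0 t"
    have ST: "sg 0 (s + t) = S + T" by (simp add: S_def T_def single_add)
    have RG: "G j = D j + (S + T) * (\<Sum>m\<in>{1..<j}. D m * G (j - m))"
      unfolding G_def using E_rec[OF j, of "s + t"] ST by simp
    have RF: "F m = D m + T * (\<Sum>m'\<in>{1..<m}. D m' * F (m - m'))" if "m \<ge> 1" for m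
      unfolding F_def T_def using E_rec[OF that] by simp
    have IH: "G (j - m') = F (j - m') + S * (\<Sum>m''\<in>{1..<j - m'}. F m'' * G (j - m' - m''))"
      if "m' \<in> {1..<j}" for m'
      using less.IH[of "j - m'"] that unfolding G_def F_def S_def by auto
    define X where "X = (\<Sum>m\<in>{1..<j}. \<Sum>m'\<in>{1..<m}. D m' * F (m - m') * G (j - m))"
    define Y where "Y = (\<Sum>m'\<in>{1..<j}. \<Sum>m''\<in>{1..<j - m'}. D m' * F m'' * G (j - m' - m''))"
    have XY: "X = Y" unfolding X_def Y_def
      by (rule double_sum_reindex[where h = "\<lambda>a b c. D a * F b * G c"])
    have A: "(\<Sum>m\<in>{1..<j}. F m * G (j - m)) = (\<Sum>m\<in>{1..<j}. D m * G (j - m)) + T * X"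
    proof -
      have "(\<Sum>m\<in>{1..<j}. F m * G (j - m))
          = (\<Sum>m\<in>{1..<j}. D m * G (j - m) + T * (\<Sum>m'\<in>{1..<m}. D m' * F (m - m') * G (j - m)))"
        by (intro sum.cong refl) (simp add: RF distrib_right sum_distrib_right mult.assoc)
      then show ?thesis by (simp add: X_def sum.distrib sum_distrib_left)
    qed
    have B: "(\<Sum>m\<in>{1..<j}. D m * G (j - m)) = (\<Sum>m\<in>{1..<j}. D m * F (j - m)) + S * Y"
    proof -
      have "(\<Sum>m\<in>{1..<j}. D m * G (j - m))
          = (\<Sum>m'\<in>{1..<j}. D m' * F (j - m') + S * (\<Sum>m''\<in>{1..<j - m'}. D m' * F m'' * G (j - m' - m'')))"
        by (intro sum.cong refl) (simp add: IH algebra_simps sum_distrib_left)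
      then show ?thesis by (simp add: Y_def sum.distrib sum_distrib_left)
    qed
    have Fj: "F j = D j + T * (\<Sum>m\<in>{1..<j}. D m * F (j - m))" using RF[OF j] .
    have "G j = D j + S * (\<Sum>m\<in>{1..<j}. D m * G (j - m)) + T * (\<Sum>m\<in>{1..<j}. D m * G (j - m))"
      using RG by (simp add: algebra_simps)
    also have "\<dots> = F j + S * ((\<Sum>m\<in>{1..<j}. D m * G (j - m)) + T * X)"
      unfolding Fj B XY by (simp add: algebra_simps)
    also have "\<dots> = F j + S * (\<Sum>m\<in>{1..<j}. F m * G (j - m))"
      by (simp only: A)
    finally show ?thesis unfolding G_def F_def S_def .
  qed
qed

lemma GEN: "Phi t (E s j) = E (s + t) j"
proof (induction j rule: less_induct)
  case (less j)
  show ?case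
  proof (cases "j = 0")
    case True then show ?thesis by (simp add: E_zero)
  next
    case False
    then have j: "j \<ge> 1" by simp
    have "Phi t (E s j) = E t j + sg 0 s * (\<Sum>m\<in>{1..<j}. E t m * Phi t (E s (j - m)))"
      by (subst E_rec[OF j]) (simp add: Phi_add Phi_mult Phi_sum Phi_sc Phi_D)
    also have "\<dots> = E t j + sg 0 s * (\<Sum>m\<in>{1..<j}. E t m * E (s + t) (j - m))"
      using less.IH by (intro arg_cong2[where f = "(+)"] arg_cong2[where f = "(*)"] sum.cong refl) auto
    also have "\<dots> = E (s + t) j" by (rule L_lemma[symmetric])
    finally show ?thesis .
  qed
qed

lemma GL: "Phi t (Tm s \<mu>) = Tm (s + t) \<mu>"
  by (induction \<mu>) (simp_all add: Tm_add Phi_mult GEN)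





lemma DERIV_K_div_pow:
  fixes \<gamma> \<delta> K z :: complex and n :: nat
  assumes "\<gamma> * z + \<delta> \<noteq> 0"
  shows "((\<lambda>w. K / (\<gamma> * w + \<delta>) ^ n) has_field_derivative
     - K * of_nat n * \<gamma> / (\<gamma> * z + \<delta>) ^ (n + 1)) (at z)"
proof (cases n)
  case 0 then show ?thesis by simp
next
  case (Suc m)
  show ?thesis using assms unfolding Suc
    apply (rule_tac derivative_eq_intros refl | simp)+
    done
qed

lemma moeb_has_deriv:
  assumes det: "a * d - b * c = 1" and Cz: "of_real c * z + of_real d \<noteq> 0"
  shows "(moeb a b c d has_field_derivative 1 / (of_real c * z + of_real d) ^ 2) (at z)"
proof -
  have "((\<lambda>z. (of_real a * z + of_real b) / (of_real c * z + of_real d)) has_field_derivative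
      (of_real a * (of_real c * z + of_real d) - (of_real a * z + of_real b) * of_real c) / (of_real c * z + of_real d) ^ 2) (at z)"
    using Cz by (auto intro!: derivative_eq_intros simp: power2_eq_square)
  moreover have "of_real a * (of_real c * z + of_real d) - (of_real a * z + of_real b) * of_real c = (of_real (a * d - b * c) :: complex)"
    by (simp add: algebra_simps)
  ultimately show ?thesis using det unfolding moeb_def[abs_def] by simp
qed

lemma open_Cnz: "open {z::complex. of_real c * z + of_real d \<noteq> 0}"
  by (intro open_Collect_neq continuous_intros)

lemma moeb_deriv_iter:
  assumes det: "a * d - b * c = 1"
  shows "p \<ge> 1 \<Longrightarrow> of_real c * z + of_real d \<noteq> 0 \<Longrightarrow>
    (deriv ^^ p) (moeb a b c d) z = fact p * (- of_real c) ^ (p - 1) / (of_real c * z + of_real d) ^ (p + 1)"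
proof (induction p arbitrary: z rule: nat_induct_at_least)
  case base
  then show ?case using DERIV_imp_deriv[OF moeb_has_deriv[OF det base(1)]] by (simp add: power2_eq_square)
next
  case (Suc p)
  let ?S = "{z::complex. of_real c * z + of_real d \<noteq> 0}"
  let ?g = "\<lambda>w::complex. fact p * (- of_real c) ^ (p - 1) / (of_real c * w + of_real d) ^ (p + 1)"
  have "(?g has_field_derivative fact (Suc p) * (- of_real c) ^ p / (of_real c * z + of_real d) ^ (Suc p + 1)) (at z)"
  proof -
    have dv: "(?g has_field_derivative - (fact p * (- of_real c) ^ (p - 1)) * of_nat (p + 1) * of_real c / (of_real c * z + of_real d) ^ (p + 1 + 1)) (at z)"
      by (rule DERIV_K_div_pow[OF Suc.prems])
    have eq: "- (fact p * (- of_real c) ^ (p - 1)) * of_nat (p + 1) * of_real c = (fact (Suc p) * (- of_real c) ^ p :: complex)"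
    proof -
      obtain q where q: "p = Suc q" using Suc.hyps by (cases p) auto
      show ?thesis unfolding q by (simp add: algebra_simps)
    qed
    show ?thesis using dv unfolding eq by (simp only: Suc_eq_plus1)
  qed
  moreover have "(deriv ^^ p) (moeb a b c d) w = ?g w" if "w \<in> ?S" for w
    using Suc.IH that by simp
  ultimately have "((deriv ^^ p) (moeb a b c d) has_field_derivative fact (Suc p) * (- of_real c) ^ p / (of_real c * z + of_real d) ^ (Suc p + 1)) (at z)"
    using has_field_derivative_transform_within_open[OF _ open_Cnz, of ?g _ z] Suc.prems by auto
  then show ?case by (simp add: DERIV_imp_deriv)
qed



lemma binom_aux: "i < k \<Longrightarrow> (k choose i) * (k - i) = (k choose Suc i) * Suc i"
  by (metis binomial_absorb_comp binomial_absorption mult.commute)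

definition Bc :: "nat \<Rightarrow> nat \<Rightarrow> nat \<Rightarrow> complex" where
  "Bc l k j = of_nat (k choose j) * pochhammer (of_nat (2 * l + j)) (k - j)"

lemma Bc_rec:
  assumes "j \<le> Suc k"
  shows "Bc l (Suc k) j = of_nat (2 * l + k + j) * Bc l k j + (if j = 0 then 0 else Bc l k (j - 1))"
proof (cases j)
  case 0
  then show ?thesis by (simp add: Bc_def pochhammer_rec' algebra_simps)
next
  case (Suc i)
  show ?thesis
  proof (cases "i = k")
    case True
    then show ?thesis using Suc by (simp add: Bc_def)
  next
    case False
    then have ik: "i < k" using assms Suc by simp
    define m where "m = k - Suc i"
    have km: "k - i = Suc m" using ik unfolding m_def by simp
    define Q :: complex where "Q = pochhammer (of_nat (2 * l + Suc i)) m"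
    have p1: "pochhammer (of_nat (2 * l + Suc i)) (Suc m) = (of_nat (2 * l + k)) * (Q :: complex)"
      unfolding Q_def pochhammer_rec' using ik by (simp add: m_def algebra_simps)
    have p2: "pochhammer (of_nat (2 * l + i)) (Suc m) = (of_nat (2 * l + i)) * (Q :: complex)"
      unfolding Q_def pochhammer_rec by (simp add: algebra_simps)
    have b: "(of_nat (k choose i) :: complex) * of_nat (k - i) = of_nat (k choose Suc i) * of_nat (Suc i)"
      using binom_aux[OF ik] by (metis of_nat_mult)
    have "Bc l (Suc k) j = (of_nat (k choose Suc i) + of_nat (k choose i)) * (of_nat (2 * l + k) * Q)"
      unfolding Bc_def Suc using km p1 by simp
    also have "\<dots> = of_nat (2 * l + k + j) * (of_nat (k choose Suc i) * Q) + of_nat (k choose i) * (of_nat (2 * l + i) * Q)"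
    proof -
      have dif: "of_nat (k - i) = (of_nat k - of_nat i :: complex)" using ik by (simp add: of_nat_diff)
      have b2: "(of_nat (k choose i) :: complex) * (of_nat k - of_nat i) = of_nat (k choose Suc i) * (of_nat i + 1)"
        using b unfolding dif by simp
      show ?thesis using b2 unfolding Suc by (simp only: of_nat_add of_nat_mult of_nat_Suc) algebra
    qed
    also have "\<dots> = of_nat (2 * l + k + j) * Bc l k j + (if j = 0 then 0 else Bc l k (j - 1))"
      unfolding Bc_def Suc using km p2 by (simp add: m_def Q_def)
    finally show ?thesis .
  qed
qed

lemma open_UHP: "open UHP"
  unfolding UHP_def by (rule open_halfspace_Im_gt)

lemma C_nz:
  assumes det: "a * d - b * c = 1" and z: "z \<in> UHP"
  shows "of_real c * z + of_real d \<noteq> (0::complex)"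
proof
  assume h: "of_real c * z + of_real d = 0"
  then have "Im (of_real c * z + of_real d) = 0" by simp
  then have "c * Im z = 0" by simp
  then have "c = 0" using z by (simp add: UHP_def)
  then show False using h det by simp
qed

lemma moeb_UHP:
  assumes det: "a * d - b * c = 1" and z: "z \<in> UHP"
  shows "moeb a b c d z \<in> UHP"
proof -
  have C: "of_real c * z + of_real d \<noteq> (0::complex)" using C_nz[OF det z] .
  have num: "Im (of_real a * z + of_real b) * Re (of_real c * z + of_real d) - Re (of_real a * z + of_real b) * Im (of_real c * z + of_real d)
     = (a * d - b * c) * Im z"
    by (simp add: algebra_simps)
  have den: "(Re (of_real c * z + of_real d))\<^sup>2 + (Im (of_real c * z + of_real d))\<^sup>2 > 0"
    using C by (metis complex_eq_0 not_less_iff_gr_or_eq sum_power2_gt_zero_iff zero_less_power2)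
  have "Im (moeb a b c d z) = (a * d - b * c) * Im z / ((Re (of_real c * z + of_real d))\<^sup>2 + (Im (of_real c * z + of_real d))\<^sup>2)"
    unfolding moeb_def by (simp only: Im_divide num)
  then show ?thesis using z den det unfolding UHP_def by simp
qed




lemma lk_Tm_add: "lk (Tm s (add_mset x \<mu>)) \<nu> = (\<Sum>A\<in>{A. A \<subseteq># \<nu>}. Ecf s x A * lk (Tm s \<mu>) (\<nu> - A))"
  by (simp add: Tm_add lookup_mult_mset lk_E)

lemma Tm_supp:
  "lk (Tm s \<mu>) \<nu> \<noteq> 0 \<Longrightarrow> is_partition \<nu> \<and> sum_mset \<nu> = sum_mset \<mu> \<and> size \<mu> \<le> size \<nu>"
proof (induction \<mu> arbitrary: \<nu>)
  case empty
  then show ?case by (simp add: lookup_one when_def is_partition_def split: if_splits)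
next
  case (add x \<mu>)
  from add.prems obtain A where A: "A \<subseteq># \<nu>" "Ecf s x A * lk (Tm s \<mu>) (\<nu> - A) \<noteq> 0"
    unfolding lk_Tm_add by (metis (no_types, lifting) mem_Collect_eq sum.not_neutral_contains_not_neutral)
  then have e: "is_partition A" "A \<noteq> {#}" "sum_mset A = x"
    by (auto simp: Ecf_def split: if_splits)
  from A have "lk (Tm s \<mu>) (\<nu> - A) \<noteq> 0" by auto
  from add.IH[OF this] have r: "is_partition (\<nu> - A)" "sum_mset (\<nu> - A) = sum_mset \<mu>" "size \<mu> \<le> size (\<nu> - A)"
    by auto
  have nu: "\<nu> = A + (\<nu> - A)" using A(1) by simp
  have "is_partition \<nu>" using e(1) r(1) by (subst nu) (auto simp: is_partition_def)
  moreover have "sum_mset \<nu> = sum_mset (add_mset x \<mu>)" using e(3) r(2) by (subst nu) (simp del: subset_mset.add_diff_inverse)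
  moreover have "size (add_mset x \<mu>) \<le> size \<nu>"
  proof -
    have "size A \<ge> 1" using e(2) by (simp add: Suc_le_eq nonempty_has_size)
    moreover have "size \<nu> = size A + size (\<nu> - A)" using A(1) by (simp add: size_Diff_submset size_mset_mono)
    ultimately show ?thesis using r(3) by simp
  qed
  ultimately show ?case by blast
qed

lemma Tm_hom:
  "lk (Tm s \<mu>) \<nu> = (if size \<mu> \<le> size \<nu> then lk (Tm 1 \<mu>) \<nu> * s ^ (size \<nu> - size \<mu>) else 0)"
proof (induction \<mu> arbitrary: \<nu> s)
  case empty
  then show ?case by (simp add: lookup_one when_def)
next
  case (add x \<mu>)
  have trm: "Ecf s x A * lk (Tm s \<mu>) (\<nu> - A)
     = (if size (add_mset x \<mu>) \<le> size \<nu> then Ecf 1 x A * lk (Tm 1 \<mu>) (\<nu> - A) * s ^ (size \<nu> - size (add_mset x \<mu>)) else 0)"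
    if A: "A \<subseteq># \<nu>" for A
  proof (cases "is_partition A \<and> A \<noteq> {#} \<and> sum_mset A = x \<and> size \<mu> \<le> size (\<nu> - A)")
    case True
    have a1: "size A \<ge> 1" using True by (simp add: Suc_le_eq nonempty_has_size)
    have sz: "size \<nu> = size A + size (\<nu> - A)" using A by (simp add: size_Diff_submset size_mset_mono)
    have "s ^ (size A - 1) * s ^ (size (\<nu> - A) - size \<mu>) = s ^ (size \<nu> - size (add_mset x \<mu>))"
      using a1 sz True by (simp add: power_add[symmetric])
    moreover have "lk (Tm s \<mu>) (\<nu> - A) = lk (Tm 1 \<mu>) (\<nu> - A) * s ^ (size (\<nu> - A) - size \<mu>)"
      using add.IH[of s "\<nu> - A"] True by simp
    ultimately show ?thesis using True sz a1 by (simp add: Ecf_def algebra_simps)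
  next
    case False
    have z1: "lk (Tm 1 \<mu>) (\<nu> - A) = 0" if "\<not> size \<mu> \<le> size (\<nu> - A)" using Tm_supp that by blast
    have z2: "lk (Tm s \<mu>) (\<nu> - A) = 0" if "\<not> size \<mu> \<le> size (\<nu> - A)" using Tm_supp that by blast
    show ?thesis using False z1 z2 by (auto simp: Ecf_def)
  qed
  have "lk (Tm s (add_mset x \<mu>)) \<nu> = (\<Sum>A\<in>{A. A \<subseteq># \<nu>}.
      (if size (add_mset x \<mu>) \<le> size \<nu> then Ecf 1 x A * lk (Tm 1 \<mu>) (\<nu> - A) * s ^ (size \<nu> - size (add_mset x \<mu>)) else 0))"
    unfolding lk_Tm_add by (intro sum.cong refl) (simp add: trm)
  also have "\<dots> = (if size (add_mset x \<mu>) \<le> size \<nu> then lk (Tm 1 (add_mset x \<mu>)) \<nu> * s ^ (size \<nu> - size (add_mset x \<mu>)) else 0)"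
    unfolding lk_Tm_add by (simp add: sum_distrib_right)
  finally show ?case .
qed

lemma Tm_diag: "is_partition \<mu> \<Longrightarrow> lk (Tm s \<mu>) \<mu> = 1"
proof (induction \<mu>)
  case empty
  then show ?case by (simp add: lookup_one when_def)
next
  case (add x \<mu>)
  have px: "x \<ge> 1" using add.prems part_pos by auto
  have pmu: "is_partition \<mu>" using add.prems by (auto simp: is_partition_def)
  have zero: "Ecf s x A * lk (Tm s \<mu>) (add_mset x \<mu> - A) = 0"
    if A: "A \<in> {A. A \<subseteq># add_mset x \<mu>} - {{#x#}}" for A
  proof (rule ccontr)
    assume nz: "Ecf s x A * lk (Tm s \<mu>) (add_mset x \<mu> - A) \<noteq> 0"
    then have e: "A \<noteq> {#}" "sum_mset A = x" by (auto simp: Ecf_def split: if_splits)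
    from nz have "size \<mu> \<le> size (add_mset x \<mu> - A)" using Tm_supp by auto
    moreover have "size (add_mset x \<mu> - A) = size \<mu> + 1 - size A" using A by (simp add: size_Diff_submset)
    moreover have "size A \<ge> 1" using e(1) by (simp add: Suc_le_eq nonempty_has_size)
    moreover have "size A \<le> size \<mu> + 1" using A by (auto dest: size_mset_mono)
    ultimately have "size A = 1" by linarith
    then obtain y where "A = {#y#}" using size_1_singleton_mset by blast
    then show False using e(2) A by auto
  qed
  have "lk (Tm s (add_mset x \<mu>)) (add_mset x \<mu>) = Ecf s x {#x#} * lk (Tm s \<mu>) (add_mset x \<mu> - {#x#})"
    unfolding lk_Tm_add
    by (subst sum.remove[of _ "{#x#}"]) (auto simp: finite_submsets zero intro!: sum.neutral)
  also have "\<dots> = 1" using px by (simp add: Ecf_def Nc_single is_partition_def add.IH[OF pmu])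
  finally show ?case .
qed




lemma DERIV_term:
  fixes K \<gamma> \<delta> z g' :: complex
  assumes "(g has_field_derivative g') (at z)"
  shows "((\<lambda>w. K * (\<gamma> * w + \<delta>) ^ n * g w) has_field_derivative
     K * (of_nat n * \<gamma> * (\<gamma> * z + \<delta>) ^ (n - 1) * g z + (\<gamma> * z + \<delta>) ^ n * g')) (at z)"
  using assms by (auto intro!: derivative_eq_intros simp: algebra_simps)

lemma pow_aux: "(of_nat n :: complex) * C ^ (n - 1) * C\<^sup>2 = of_nat n * C ^ (n + 1)"
  by (cases n) (simp_all add: power2_eq_square)

lemma Bol_alg:
  fixes C c :: complex and F :: "nat \<Rightarrow> complex"
  shows "C\<^sup>2 * (\<Sum>j\<le>k. Bc l k j * c ^ (k - j) * (of_nat (2 * l + k + j) * c * C ^ (2 * l + k + j - 1) * F j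
            + C ^ (2 * l + k + j) * F (Suc j)))
     = (\<Sum>j\<le>Suc k. Bc l (Suc k) j * c ^ (Suc k - j) * C ^ (2 * l + Suc k + j) * F j)"
proof -
  define X where "X j = c ^ (Suc k - j) * C ^ (2 * l + Suc k + j) * F j" for j
  have "(\<Sum>j\<le>Suc k. Bc l (Suc k) j * c ^ (Suc k - j) * C ^ (2 * l + Suc k + j) * F j)
      = (\<Sum>j\<le>Suc k. of_nat (2 * l + k + j) * Bc l k j * X j + (if j = 0 then 0 else Bc l k (j - 1)) * X j)"
    by (intro sum.cong refl) (simp add: Bc_rec X_def algebra_simps)
  also have "\<dots> = (\<Sum>j\<le>Suc k. of_nat (2 * l + k + j) * Bc l k j * X j) + (\<Sum>j\<le>Suc k. (if j = 0 then 0 else Bc l k (j - 1)) * X j)"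
    by (rule sum.distrib)
  also have "(\<Sum>j\<le>Suc k. of_nat (2 * l + k + j) * Bc l k j * X j) = (\<Sum>j\<le>k. of_nat (2 * l + k + j) * Bc l k j * X j)"
    by (simp add: Bc_def)
  also have "(\<Sum>j\<le>Suc k. (if j = 0 then 0 else Bc l k (j - 1)) * X j) = (\<Sum>j\<le>k. Bc l k j * X (Suc j))"
    by (subst sum.atMost_Suc_shift) simp
  also have "(\<Sum>j\<le>k. of_nat (2 * l + k + j) * Bc l k j * X j) + (\<Sum>j\<le>k. Bc l k j * X (Suc j))
      = (\<Sum>j\<le>k. of_nat (2 * l + k + j) * Bc l k j * X j + Bc l k j * X (Suc j))"
    by (rule sum.distrib[symmetric])
  also have "\<dots> = C\<^sup>2 * (\<Sum>j\<le>k. Bc l k j * c ^ (k - j) * (of_nat (2 * l + k + j) * c * C ^ (2 * l + k + j - 1) * F j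
            + C ^ (2 * l + k + j) * F (Suc j)))"
    unfolding sum_distrib_left
  proof (intro sum.cong refl)
    fix j assume j: "j \<in> {..k}"
    have e1: "c ^ (Suc k - j) = c ^ (k - j) * c" using j by (simp add: Suc_diff_le)
    have e2: "C ^ (2 * l + Suc k + j) = C ^ (2 * l + k + j + 1)" by simp
    have e3: "C ^ (2 * l + Suc k + Suc j) = C ^ (2 * l + k + j) * C\<^sup>2" by (simp add: power2_eq_square)
    have "of_nat (2 * l + k + j) * Bc l k j * X j =
        Bc l k j * c ^ (k - j) * c * F j * (of_nat (2 * l + k + j) * C ^ (2 * l + k + j + 1))"
      unfolding X_def e1 e2 by (simp add: algebra_simps)
    also have "\<dots> = Bc l k j * c ^ (k - j) * c * F j * (of_nat (2 * l + k + j) * C ^ (2 * l + k + j - 1) * C\<^sup>2)"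
      by (simp only: pow_aux)
    finally have t1: "of_nat (2 * l + k + j) * Bc l k j * X j = C\<^sup>2 * (Bc l k j * c ^ (k - j) * (of_nat (2 * l + k + j) * c * C ^ (2 * l + k + j - 1) * F j))"
      by (simp add: algebra_simps)
    have t2: "Bc l k j * X (Suc j) = C\<^sup>2 * (Bc l k j * c ^ (k - j) * (C ^ (2 * l + k + j) * F (Suc j)))"
      unfolding X_def e3 by (simp add: algebra_simps)
    show "of_nat (2 * l + k + j) * Bc l k j * X j + Bc l k j * X (Suc j) =
        C\<^sup>2 * (Bc l k j * c ^ (k - j) * (of_nat (2 * l + k + j) * c * C ^ (2 * l + k + j - 1) * F j + C ^ (2 * l + k + j) * F (Suc j)))"
      unfolding t1 t2 by (simp add: algebra_simps)
  qed
  finally show ?thesis by simp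
qed


lemma Bol:
  fixes a b c d :: real and f :: "complex \<Rightarrow> complex" and l :: nat
  assumes det: "a * d - b * c = 1" and hol: "f holomorphic_on UHP"
    and modf: "\<And>z. z \<in> UHP \<Longrightarrow> f (moeb a b c d z) = (of_real c * z + of_real d) ^ (2 * l) * f z"
  shows "z \<in> UHP \<Longrightarrow> (deriv ^^ k) f (moeb a b c d z)
     = (\<Sum>j\<le>k. Bc l k j * (of_real c) ^ (k - j) * (of_real c * z + of_real d) ^ (2 * l + k + j) * (deriv ^^ j) f z)"
proof (induction k arbitrary: z)
  case 0
  show ?case using modf[OF 0] by (simp add: Bc_def)
next
  case (Suc k)
  let ?C = "\<lambda>w. of_real c * w + of_real d :: complex"
  let ?R = "\<lambda>w. \<Sum>j\<le>k. Bc l k j * (of_real c) ^ (k - j) * (?C w) ^ (2 * l + k + j) * (deriv ^^ j) f w"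
  let ?R' = "\<Sum>j\<le>k. Bc l k j * (of_real c) ^ (k - j) * (of_nat (2 * l + k + j) * of_real c * (?C z) ^ (2 * l + k + j - 1) * (deriv ^^ j) f z
      + (?C z) ^ (2 * l + k + j) * (deriv ^^ Suc j) f z)"
  have hj: "((deriv ^^ j) f has_field_derivative (deriv ^^ Suc j) f w) (at w)" if "w \<in> UHP" for j w
    using holomorphic_derivI[OF holomorphic_higher_deriv[OF hol open_UHP] open_UHP that] by simp
  have dR: "(?R has_field_derivative ?R') (at z)"
    by (rule DERIV_sum) (rule DERIV_term[OF hj[OF Suc.prems]])
  have mz: "moeb a b c d z \<in> UHP" using moeb_UHP[OF det Suc.prems] .
  have Cz: "?C z \<noteq> 0" using C_nz[OF det Suc.prems] .
  have dh: "((\<lambda>w. (deriv ^^ k) f (moeb a b c d w)) has_field_derivative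
      (deriv ^^ Suc k) f (moeb a b c d z) * (1 / (?C z) ^ 2)) (at z)"
    by (rule DERIV_chain2[OF hj[OF mz] moeb_has_deriv[OF det Cz]])
  have dh2: "((\<lambda>w. (deriv ^^ k) f (moeb a b c d w)) has_field_derivative ?R') (at z)"
    by (rule has_field_derivative_transform_within_open[OF dR open_UHP Suc.prems]) (simp add: Suc.IH)
  have "(deriv ^^ Suc k) f (moeb a b c d z) * (1 / (?C z) ^ 2) = ?R'"
    by (rule DERIV_unique[OF dh dh2])
  then have "(deriv ^^ Suc k) f (moeb a b c d z) = (?C z)\<^sup>2 * ?R'"
    using Cz by (simp add: field_simps)
  also have "\<dots> = (\<Sum>j\<le>Suc k. Bc l (Suc k) j * (of_real c) ^ (Suc k - j) * (?C z) ^ (2 * l + Suc k + j) * (deriv ^^ j) f z)"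
    by (rule Bol_alg[where F = "\<lambda>j. (deriv ^^ j) f z"])
  finally show ?case .
qed




lemma sg0_pow: "(sg 0 a :: pm) ^ n = sg 0 (a ^ n)"
  by (induction n) (simp_all add: sg0_mult[symmetric] mult.commute)

lemma bmode_image_eq:
  assumes det: "a * d - b * c = 1" and Cz: "of_real c * z + of_real d \<noteq> (0::complex)"
  shows "bmode_image a b c d j \<nu> z
     = lk (sg 0 (1 / (of_real c * z + of_real d) ^ 2) * E (- of_real c / (of_real c * z + of_real d)) j) \<nu>"
proof (cases "is_partition \<nu> \<and> \<nu> \<noteq> {#} \<and> sum_mset \<nu> = j")
  case True
  let ?C = "of_real c * z + of_real d :: complex"
  have p: "size \<nu> \<ge> 1" using True by (simp add: Suc_le_eq nonempty_has_size)
  define x where "x = - of_real c / ?C"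
  define P where "P = (\<Prod>k\<in>set_mset \<nu>. (of_nat (fact (count \<nu> k)) :: complex))"
  have eq: "x ^ (size \<nu> - 1) / ?C ^ 2 = (- of_real c) ^ (size \<nu> - 1) / ?C ^ (size \<nu> + 1)"
  proof -
    obtain q where q: "size \<nu> = Suc q" using p by (cases "size \<nu>") auto
    have "\<And>u C::complex. (u / C) ^ q / C ^ 2 = u ^ q / C ^ (Suc q + 1)"
      by (simp add: power_divide divide_divide_eq_left power_add power2_eq_square mult_ac)
    then show ?thesis unfolding q x_def by (simp only: diff_Suc_1)
  qed
  have "bmode_image a b c d j \<nu> z = (deriv ^^ size \<nu>) (moeb a b c d) z / P"
    using True unfolding bmode_image_def P_def by simp
  also have "\<dots> = fact (size \<nu>) * (- of_real c) ^ (size \<nu> - 1) / ?C ^ (size \<nu> + 1) / P"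
    by (simp only: moeb_deriv_iter[OF det p Cz])
  also have "\<dots> = fact (size \<nu>) * ((- of_real c) ^ (size \<nu> - 1) / ?C ^ (size \<nu> + 1)) / P"
    by (simp only: times_divide_eq_right)
  also have "\<dots> = fact (size \<nu>) * (x ^ (size \<nu> - 1) / ?C ^ 2) / P"
    by (simp only: eq)
  also have "\<dots> = (1 / ?C ^ 2) * ((of_nat (fact (size \<nu>)) / P) * x ^ (size \<nu> - 1))"
    by (simp add: divide_inverse mult_ac)
  also have "\<dots> = lk (sg 0 (1 / ?C ^ 2) * E x j) \<nu>"
    unfolding lk_sc_mult lk_E Ecf_def Nc_def P_def using True by simp
  finally show ?thesis unfolding x_def .
next
  case False
  have "bmode_image a b c d j \<nu> z = 0" unfolding bmode_image_def by (rule if_not_P[OF False])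
  moreover have "Ecf (- of_real c / (of_real c * z + of_real d)) j \<nu> = 0" unfolding Ecf_def by (rule if_not_P[OF False])
  ultimately show ?thesis by (simp add: lk_sc_mult lk_E)
qed

lemma foldr_bmode:
  assumes det: "a * d - b * c = 1" and Cz: "of_real c * z + of_real d \<noteq> (0::complex)"
  shows "foldr (\<lambda>j X. multE (bmode_image a b c d j) X) xs unitE \<nu> z
    = lk (prod_list (map (\<lambda>j. sg 0 (1 / (of_real c * z + of_real d) ^ 2) * E (- of_real c / (of_real c * z + of_real d)) j) xs)) \<nu>"
proof (induction xs arbitrary: \<nu>)
  case Nil
  then show ?case by (simp add: unitE_def lookup_one when_def)
next
  case (Cons x xs)
  let ?F = "\<lambda>j X. multE (bmode_image a b c d j) X"
  have "foldr ?F (x # xs) unitE \<nu> z = multE (bmode_image a b c d x) (foldr ?F xs unitE) \<nu> z"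
    by (simp only: foldr_Cons o_apply)
  also have "\<dots> = (\<Sum>A\<in>{A. A \<subseteq># \<nu>}. bmode_image a b c d x A z * foldr ?F xs unitE (\<nu> - A) z)"
    by (rule multE_def)
  finally show ?case by (simp add: lookup_mult_mset Cons.IH bmode_image_eq[OF det Cz])
qed

lemma bmono_image_eq:
  assumes det: "a * d - b * c = 1" and Cz: "of_real c * z + of_real d \<noteq> (0::complex)"
  shows "bmono_image a b c d \<rho> \<nu> z
    = (1 / (of_real c * z + of_real d) ^ 2) ^ size \<rho> * lk (Tm (- of_real c / (of_real c * z + of_real d)) \<rho>) \<nu>"
proof -
  let ?g = "\<lambda>j. sg 0 (1 / (of_real c * z + of_real d) ^ 2) * E (- of_real c / (of_real c * z + of_real d)) j"
  have "prod_list (map ?g (sorted_list_of_multiset \<rho>)) = prod_mset (image_mset ?g \<rho>)"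
  proof -
    have "\<And>xs. prod_list (map ?g xs) = prod_mset (image_mset ?g (mset xs))" by (induct_tac xs) auto
    then show ?thesis by simp
  qed
  also have "\<dots> = sg 0 ((1 / (of_real c * z + of_real d) ^ 2) ^ size \<rho>) * Tm (- of_real c / (of_real c * z + of_real d)) \<rho>"
  proof -
    have "prod_mset (image_mset ?g \<rho>) = sg 0 (1 / (of_real c * z + of_real d) ^ 2) ^ size \<rho> * Tm (- of_real c / (of_real c * z + of_real d)) \<rho>"
      by (induction \<rho>) (simp_all add: Tm_add mult_ac)
    then show ?thesis by (simp only: sg0_pow)
  qed
  finally show ?thesis unfolding bmono_image_def foldr_bmode[OF det Cz] by (simp add: lk_sc_mult)
qed




lemma piD_bmono:
  "piD a b c d (bmono \<mu>) \<nu> z = (if is_partition \<mu> \<and> sum_mset \<mu> = sum_mset \<nu> then bmono_image a b c d \<mu> \<nu> z else 0)"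
proof -
  have "piD a b c d (bmono \<mu>) \<nu> z = (\<Sum>\<rho>\<in>{\<rho>. is_partition \<rho> \<and> sum_mset \<rho> = sum_mset \<nu>}.
          if \<mu> = \<rho> then bmono_image a b c d \<rho> \<nu> z else 0)"
    unfolding piD_def bmono_def by (intro sum.cong refl) auto
  also have "\<dots> = (if is_partition \<mu> \<and> sum_mset \<mu> = sum_mset \<nu> then bmono_image a b c d \<mu> \<nu> z else 0)"
    by (subst sum.delta'[OF finite_partitions]) auto
  finally show ?thesis .
qed

lemma pow_aux2: "(1 / C ^ 2) ^ m * (u / C) ^ k = (u :: complex) ^ k / C ^ (m + (m + k))"
  by (simp add: power_divide power_add power_mult_distrib divide_divide_eq_left power2_eq_square power_mult[symmetric] mult_ac)

lemma piD_bmono_formula: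
  assumes det: "a * d - b * c = 1" and z: "z \<in> UHP" and pm: "is_partition \<mu>"
  shows "piD a b c d (bmono \<mu>) \<nu> z = (if is_partition \<nu> \<and> sum_mset \<nu> = sum_mset \<mu> \<and> size \<mu> \<le> size \<nu>
     then lk (Tm 1 \<mu>) \<nu> * (- of_real c) ^ (size \<nu> - size \<mu>) / (of_real c * z + of_real d) ^ (size \<mu> + size \<nu>) else 0)"
proof -
  let ?C = "of_real c * z + of_real d :: complex"
  let ?x = "- of_real c / ?C"
  have Cz: "?C \<noteq> 0" using C_nz[OF det z] .
  have A: "piD a b c d (bmono \<mu>) \<nu> z = (if sum_mset \<mu> = sum_mset \<nu> then (1 / ?C ^ 2) ^ size \<mu> * lk (Tm ?x \<mu>) \<nu> else 0)"
    using pm by (simp add: piD_bmono bmono_image_eq[OF det Cz])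
  show ?thesis
  proof (cases "is_partition \<nu> \<and> sum_mset \<nu> = sum_mset \<mu> \<and> size \<mu> \<le> size \<nu>")
    case True
    have h: "lk (Tm ?x \<mu>) \<nu> = (if size \<mu> \<le> size \<nu> then lk (Tm 1 \<mu>) \<nu> * ?x ^ (size \<nu> - size \<mu>) else 0)"
      by (rule Tm_hom)
    have "lk (Tm ?x \<mu>) \<nu> = lk (Tm 1 \<mu>) \<nu> * ?x ^ (size \<nu> - size \<mu>)" using True by (simp only: h if_True)
    moreover have "size \<mu> + size \<nu> = size \<mu> + (size \<mu> + (size \<nu> - size \<mu>))" using True by simp
    ultimately show ?thesis using True A pow_aux2[of ?C "size \<mu>" "- of_real c" "size \<nu> - size \<mu>"]
      by (simp add: mult_ac)
  next
    case False
    have "lk (Tm ?x \<mu>) \<nu> = 0" if "sum_mset \<mu> = sum_mset \<nu>"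
    proof (rule ccontr)
      assume "lk (Tm ?x \<mu>) \<nu> \<noteq> 0"
      from Tm_supp[OF this] False that show False by auto
    qed
    then show ?thesis using A False by auto
  qed
qed

lemma tcoef_eq:
  assumes pm: "is_partition \<mu>"
  shows "tcoef \<mu> = (\<lambda>\<nu>. if is_partition \<nu> \<and> sum_mset \<nu> = sum_mset \<mu> \<and> size \<mu> \<le> size \<nu> then lk (Tm 1 \<mu>) \<nu> else 0)"
    (is "_ = ?T")
  unfolding tcoef_def
proof (rule the_equality)
  show "(\<forall>\<nu>. \<not> (is_partition \<nu> \<and> sum_mset \<nu> = sum_mset \<mu> \<and> size \<mu> \<le> size \<nu>) \<longrightarrow> ?T \<nu> = 0) \<and>
     (\<forall>a b c d :: real. a * d - b * c = 1 \<longrightarrow>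
        (\<forall>\<nu>. \<forall>z\<in>UHP. piD a b c d (bmono \<mu>) \<nu> z =
           (if is_partition \<nu> \<and> sum_mset \<nu> = sum_mset \<mu> \<and> size \<mu> \<le> size \<nu>
            then ?T \<nu> * (- of_real c) ^ (size \<nu> - size \<mu>)
                 / (of_real c * z + of_real d) ^ (size \<mu> + size \<nu>)
            else 0)))"
    using piD_bmono_formula[OF _ _ pm] by auto
next
  fix t
  assume P: "(\<forall>\<nu>. \<not> (is_partition \<nu> \<and> sum_mset \<nu> = sum_mset \<mu> \<and> size \<mu> \<le> size \<nu>) \<longrightarrow> t \<nu> = 0) \<and>
     (\<forall>a b c d :: real. a * d - b * c = 1 \<longrightarrow>
        (\<forall>\<nu>. \<forall>z\<in>UHP. piD a b c d (bmono \<mu>) \<nu> z =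
           (if is_partition \<nu> \<and> sum_mset \<nu> = sum_mset \<mu> \<and> size \<mu> \<le> size \<nu>
            then t \<nu> * (- of_real c) ^ (size \<nu> - size \<mu>)
                 / (of_real c * z + of_real d) ^ (size \<mu> + size \<nu>)
            else 0)))"
  show "t = ?T"
  proof
    fix \<nu>
    show "t \<nu> = ?T \<nu>"
    proof (cases "is_partition \<nu> \<and> sum_mset \<nu> = sum_mset \<mu> \<and> size \<mu> \<le> size \<nu>")
      case False
      then show ?thesis using P by auto
    next
      case True
      have iU: "\<i> \<in> UHP" by (simp add: UHP_def)
      have det1: "(1::real) * 1 - 0 * (-1) = 1" by simp
      have K0: "(of_real (-1) * \<i> + of_real 1 :: complex) \<noteq> 0"
        by (simp add: complex_eq_iff)
      have K: "(of_real (-1) * \<i> + of_real 1 :: complex) ^ (size \<mu> + size \<nu>) \<noteq> 0"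
        using K0 by (rule power_not_zero)
      have "t \<nu> * (- of_real (-1)) ^ (size \<nu> - size \<mu>) / (of_real (-1) * \<i> + of_real 1) ^ (size \<mu> + size \<nu>)
          = piD 1 0 (-1) 1 (bmono \<mu>) \<nu> \<i>"
        using P True iU by auto
      also have "\<dots> = lk (Tm 1 \<mu>) \<nu> * (- of_real (-1)) ^ (size \<nu> - size \<mu>) / (of_real (-1) * \<i> + of_real 1) ^ (size \<mu> + size \<nu>)"
        using piD_bmono_formula[OF det1 iU pm] True by simp
      finally show ?thesis using K True by simp
    qed
  qed
qed




lemma poch_pos_nz: "m > 0 \<Longrightarrow> pochhammer (of_nat m :: complex) n \<noteq> 0"
proof
  assume m: "m > 0" and "pochhammer (of_nat m :: complex) n = 0"
  then obtain k where "(of_nat m :: complex) = - of_nat k" by (auto simp: pochhammer_eq_0_iff)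
  then have "(of_nat (m + k) :: complex) = 0" by (simp add: eq_neg_iff_add_eq_0)
  then show False using m by (simp only: of_nat_eq_0_iff)
qed

lemma prod_inv_poch: "(\<Prod>t<k. 1 / (of_nat (2 * l + t) :: complex)) = 1 / pochhammer (of_nat (2 * l)) k"
  by (simp add: pochhammer_prod atLeast0LessThan prod_dividef)

lemma ccoef_eq:
  assumes pm: "is_partition \<mu>" and sz: "size \<mu> = l"
    and rho: "is_partition \<rho>" "sum_mset \<rho> = sum_mset \<mu>" "l \<le> size \<rho>"
  shows "ccoef l \<mu> \<rho> = lk (Tm 1 \<mu>) \<rho> / pochhammer (of_nat (2 * l)) (size \<rho> - l)"
proof (cases "\<rho> = \<mu>")
  case True
  then show ?thesis using Tm_diag[OF pm] sz by (simp add: ccoef_def)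
next
  case False
  have "tcoef \<mu> \<rho> = lk (Tm 1 \<mu>) \<rho>" using tcoef_eq[OF pm] rho sz by simp
  then show ?thesis using False by (simp only: ccoef_def if_not_P[OF False] prod_inv_poch) simp
qed

lemma pow_aux3:
  fixes C c :: complex
  assumes C: "C \<noteq> 0" and jk: "j \<le> k"
  shows "(1 / C ^ 2) ^ (l + k) * c ^ (k - j) * C ^ (2 * l + k + j) = (c / C) ^ (k - j)"
proof -
  obtain m where k: "k = j + m" using jk le_Suc_ex by blast
  have a1: "(1 / C) ^ n * C ^ n = 1" for n using C by (simp add: power_mult_distrib[symmetric])
  have a2: "(1 / C) ^ m * c ^ m = (c / C) ^ m" by (simp add: power_mult_distrib[symmetric])
  have e1: "(1 / C ^ 2) ^ (l + j + m) = (1 / C) ^ (2 * (l + j)) * (1 / C) ^ m * (1 / C) ^ m"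
  proof -
    have "(1 / C ^ 2) ^ (l + j + m) = (1 / C) ^ (2 * (l + j + m))" by (simp only: power_one_over power_mult)
    also have "2 * (l + j + m) = 2 * (l + j) + m + m" by simp
    finally show ?thesis by (simp only: power_add)
  qed
  have e2: "C ^ (2 * l + j + m + j) = C ^ (2 * (l + j)) * C ^ m"
  proof -
    have "2 * l + j + m + j = 2 * (l + j) + m" by simp
    then show ?thesis by (simp only: power_add)
  qed
  have "(1 / C ^ 2) ^ (l + j + m) * c ^ m * C ^ (2 * l + j + m + j)
     = ((1 / C) ^ (2 * (l + j)) * C ^ (2 * (l + j))) * ((1 / C) ^ m * C ^ m) * ((1 / C) ^ m * c ^ m)"
    unfolding e1 e2 by (simp only: mult_ac)
  also have "\<dots> = (c / C) ^ m" unfolding a1 a2 by simp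
  finally have "(1 / C ^ 2) ^ (l + j + m) * c ^ m * C ^ (2 * l + j + m + j) = (c / C) ^ m" .
  then show ?thesis unfolding k by (simp add: add.assoc)
qed

lemma poch_ratio:
  assumes l: "l \<ge> 1" and jk: "j \<le> k"
  shows "Bc l k j / pochhammer (of_nat (2 * l)) k = of_nat (k choose j) / pochhammer (of_nat (2 * l)) j"
proof -
  have "pochhammer (of_nat (2 * l) :: complex) k = pochhammer (of_nat (2 * l)) j * pochhammer (of_nat (2 * l + j)) (k - j)"
    using pochhammer_product[OF jk, of "of_nat (2 * l) :: complex"] by simp
  moreover have "pochhammer (of_nat (2 * l + j) :: complex) (k - j) \<noteq> 0" using l by (intro poch_pos_nz) simp
  ultimately show ?thesis unfolding Bc_def by simp
qed

lemma lk_Phi: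
  assumes "finite S" "ks X \<subseteq> S"
  shows "lk (Phi t X) \<nu> = (\<Sum>\<rho>\<in>S. lk X \<rho> * lk (Tm t \<rho>) \<nu>)"
  by (simp add: Phi_superset[OF assms] lookup_sum lk_sc_mult)

lemma keys_Tm: "ks (Tm s \<mu>) \<subseteq> {\<rho>. is_partition \<rho> \<and> sum_mset \<rho> = sum_mset \<mu>}"
  using Tm_supp by (auto simp: in_keys_iff)




lemma reassoc: "(p :: complex) * L * (T / Pk) * (B * q * r * F) = L * T * (p * q * r) * (B / Pk) * F"
  by (simp add: divide_inverse mult_ac)

lemma main_real:
  fixes a b c d :: real and f :: "complex \<Rightarrow> complex"
  assumes det: "a * d - b * c = 1" and hol: "f holomorphic_on UHP"
    and modf: "\<And>z. z \<in> UHP \<Longrightarrow> f (moeb a b c d z) = (of_real c * z + of_real d) ^ (2 * l) * f z"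
    and l1: "1 \<le> l" and pm: "is_partition \<mu>" and sz: "size \<mu> = l" and z: "z \<in> UHP"
  shows "piD a b c d (Fel l f \<mu>) \<nu> z = Fel l f \<mu> \<nu> z"
proof -
  define C where "C = of_real c * z + of_real d"
  define x where "x = - of_real c / C"
  define w where "w = moeb a b c d z"
  define P where "P = {\<rho>. is_partition \<rho> \<and> sum_mset \<rho> = sum_mset \<nu>}"
  have Cz: "C \<noteq> 0" unfolding C_def using C_nz[OF det z] .
  have finP: "finite P" unfolding P_def by (rule finite_partitions)
  have bm: "bmono_image a b c d \<rho> \<nu> z = (1 / C ^ 2) ^ size \<rho> * lk (Tm x \<rho>) \<nu>" for \<rho>
    using bmono_image_eq[OF det Cz[unfolded C_def]] unfolding C_def x_def .
  have LHS: "piD a b c d (Fel l f \<mu>) \<nu> z = (\<Sum>\<rho>\<in>P. (1 / C ^ 2) ^ size \<rho> * lk (Tm x \<rho>) \<nu> * Fel l f \<mu> \<rho> w)"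
    unfolding piD_def P_def w_def bm ..
  show ?thesis
  proof (cases "is_partition \<nu> \<and> sum_mset \<nu> = sum_mset \<mu>")
    case False
    have RHS0: "Fel l f \<mu> \<nu> z = 0" using False by (auto simp: Fel_def)
    have "(1 / C ^ 2) ^ size \<rho> * lk (Tm x \<rho>) \<nu> * Fel l f \<mu> \<rho> w = 0" if "\<rho> \<in> P" for \<rho>
    proof (cases "is_partition \<nu>")
      case True
      then have "sum_mset \<rho> \<noteq> sum_mset \<mu>" using False that by (auto simp: P_def)
      then show ?thesis by (simp add: Fel_def)
    next
      case False
      then have "lk (Tm x \<rho>) \<nu> = 0" using Tm_supp by blast
      then show ?thesis by simp
    qed
    then show ?thesis unfolding LHS RHS0 by (simp add: sum.neutral)
  next
    case True
    define K where "K = size \<nu> - l"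
    define T1 where "T1 \<rho> = lk (Tm 1 \<mu>) \<rho>" for \<rho>
    define \<tau> where "\<tau> \<rho> = (if l \<le> size \<rho> then T1 \<rho> * lk (Tm x \<rho>) \<nu> else 0)" for \<rho>
    define g where "g (\<rho>::nat multiset) (j::nat) = of_nat (size \<rho> - l choose j) * (- x) ^ (size \<rho> - l - j) * ((deriv ^^ j) f z / pochhammer (of_nat (2 * l)) j)" for \<rho> j
    have Pmu: "P = {\<rho>. is_partition \<rho> \<and> sum_mset \<rho> = sum_mset \<mu>}" using True unfolding P_def by simp
    have tau_nz: "size \<rho> - l \<le> K" if "\<tau> \<rho> \<noteq> 0" for \<rho>
    proof -
      have "lk (Tm x \<rho>) \<nu> \<noteq> 0" using that by (auto simp: \<tau>_def split: if_splits)
      then have "size \<rho> \<le> size \<nu>" using Tm_supp by blast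
      then show ?thesis unfolding K_def by simp
    qed
    have TERM: "(1 / C ^ 2) ^ size \<rho> * lk (Tm x \<rho>) \<nu> * Fel l f \<mu> \<rho> w = \<tau> \<rho> * (\<Sum>j\<le>K. g \<rho> j)" if rP: "\<rho> \<in> P" for \<rho>
    proof -
      have rp: "is_partition \<rho>" "sum_mset \<rho> = sum_mset \<mu>" using rP True unfolding P_def by auto
      show ?thesis
      proof (cases "l \<le> size \<rho>")
        case False
        then have "Fel l f \<mu> \<rho> w = 0" "\<tau> \<rho> = 0" by (auto simp: Fel_def \<tau>_def)
        then show ?thesis by simp
      next
        case lr: True
        show ?thesis
        proof (cases "lk (Tm x \<rho>) \<nu> = 0")
          case True then show ?thesis by (simp add: \<tau>_def)
        next
          case False
          define k where "k = size \<rho> - l"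
          have kK: "k \<le> K" using Tm_supp[OF False] unfolding k_def K_def by auto
          have szr: "size \<rho> = l + k" using lr k_def by simp
          have Fw: "Fel l f \<mu> \<rho> w = T1 \<rho> / pochhammer (of_nat (2 * l)) k *
              (\<Sum>j\<le>k. Bc l k j * (of_real c) ^ (k - j) * C ^ (2 * l + k + j) * (deriv ^^ j) f z)"
          proof -
            have "Fel l f \<mu> \<rho> w = ccoef l \<mu> \<rho> * (deriv ^^ k) f w" using rp lr unfolding Fel_def k_def by simp
            also have "ccoef l \<mu> \<rho> = T1 \<rho> / pochhammer (of_nat (2 * l)) k"
              using ccoef_eq[OF pm sz rp lr] unfolding T1_def k_def .
            also have "(deriv ^^ k) f w = (\<Sum>j\<le>k. Bc l k j * (of_real c) ^ (k - j) * C ^ (2 * l + k + j) * (deriv ^^ j) f z)"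
              unfolding w_def C_def by (rule Bol[OF det hol modf z])
            finally show ?thesis .
          qed
          have "(1 / C ^ 2) ^ size \<rho> * lk (Tm x \<rho>) \<nu> * Fel l f \<mu> \<rho> w
              = (\<Sum>j\<le>k. (1 / C ^ 2) ^ (l + k) * lk (Tm x \<rho>) \<nu> * (T1 \<rho> / pochhammer (of_nat (2 * l)) k) *
                   (Bc l k j * (of_real c) ^ (k - j) * C ^ (2 * l + k + j) * (deriv ^^ j) f z))"
            unfolding Fw szr sum_distrib_left by (simp only: mult.assoc)
          also have "\<dots> = (\<Sum>j\<le>k. \<tau> \<rho> * g \<rho> j)"
          proof (rule sum.cong[OF refl])
            fix j assume "j \<in> {..k}"
            then have jk: "j \<le> k" by simp
            have "(1 / C ^ 2) ^ (l + k) * lk (Tm x \<rho>) \<nu> * (T1 \<rho> / pochhammer (of_nat (2 * l)) k) *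
                   (Bc l k j * (of_real c) ^ (k - j) * C ^ (2 * l + k + j) * (deriv ^^ j) f z)
                = lk (Tm x \<rho>) \<nu> * T1 \<rho> * ((1 / C ^ 2) ^ (l + k) * (of_real c) ^ (k - j) * C ^ (2 * l + k + j))
                   * (Bc l k j / pochhammer (of_nat (2 * l)) k) * (deriv ^^ j) f z"
              by (rule reassoc)
            also have "\<dots> = lk (Tm x \<rho>) \<nu> * T1 \<rho> * ((of_real c / C) ^ (k - j))
                   * (of_nat (k choose j) / pochhammer (of_nat (2 * l)) j) * (deriv ^^ j) f z"
              by (simp only: pow_aux3[OF Cz jk] poch_ratio[OF l1 jk])
            also have "\<dots> = \<tau> \<rho> * g \<rho> j"
            proof -
              have mx: "- x = of_real c / C" unfolding x_def by simp
              show ?thesis unfolding \<tau>_def g_def mx using lr unfolding k_def by (simp add: mult_ac)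
            qed
            finally show "(1 / C ^ 2) ^ (l + k) * lk (Tm x \<rho>) \<nu> * (T1 \<rho> / pochhammer (of_nat (2 * l)) k) *
                   (Bc l k j * (of_real c) ^ (k - j) * C ^ (2 * l + k + j) * (deriv ^^ j) f z) = \<tau> \<rho> * g \<rho> j" .
          qed
          also have "\<dots> = \<tau> \<rho> * (\<Sum>j\<le>k. g \<rho> j)" by (simp add: sum_distrib_left)
          also have "(\<Sum>j\<le>k. g \<rho> j) = (\<Sum>j\<le>K. g \<rho> j)"
            by (rule sum.mono_neutral_left) (use kK in \<open>auto simp: g_def k_def\<close>)
          finally show ?thesis .
        qed
      qed
    qed
    have Q: "(\<Sum>\<rho>\<in>P. \<tau> \<rho> * (of_nat (size \<rho> - l choose j) * (- x) ^ (size \<rho> - l - j)))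
        = (if j = K then (if l \<le> size \<nu> then T1 \<nu> else 0) else 0)" if jK: "j \<le> K" for j
    proof -
      define tg where "tg j = (if j = K then (if l \<le> size \<nu> then T1 \<nu> else 0) else 0)" for j
      define Qc where "Qc j = (\<Sum>\<rho>\<in>P. \<tau> \<rho> * (of_nat (size \<rho> - l choose j) * (- x) ^ (size \<rho> - l - j)))" for j
      have poly: "(\<Sum>j\<le>K. Qc j * y ^ j) = (\<Sum>j\<le>K. tg j * y ^ j)" for y
      proof -
        have "(\<Sum>j\<le>K. Qc j * y ^ j) = (\<Sum>\<rho>\<in>P. \<tau> \<rho> * (\<Sum>j\<le>K. of_nat (size \<rho> - l choose j) * y ^ j * (- x) ^ (size \<rho> - l - j)))"
          unfolding Qc_def sum_distrib_right sum_distrib_left by (subst sum.swap) (simp add: mult_ac)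
        also have "\<dots> = (\<Sum>\<rho>\<in>P. \<tau> \<rho> * (y - x) ^ (size \<rho> - l))"
        proof (rule sum.cong[OF refl])
          fix \<rho> assume "\<rho> \<in> P"
          show "\<tau> \<rho> * (\<Sum>j\<le>K. of_nat (size \<rho> - l choose j) * y ^ j * (- x) ^ (size \<rho> - l - j)) = \<tau> \<rho> * (y - x) ^ (size \<rho> - l)"
          proof (cases "\<tau> \<rho> = 0")
            case True then show ?thesis by simp
          next
            case False
            have kk: "size \<rho> - l \<le> K" using tau_nz[OF False] .
            have "(y - x) ^ (size \<rho> - l) = (y + (- x)) ^ (size \<rho> - l)" by simp
            also have "\<dots> = (\<Sum>j\<le>size \<rho> - l. of_nat (size \<rho> - l choose j) * y ^ j * (- x) ^ (size \<rho> - l - j))"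
              by (rule binomial_ring)
            also have "\<dots> = (\<Sum>j\<le>K. of_nat (size \<rho> - l choose j) * y ^ j * (- x) ^ (size \<rho> - l - j))"
              by (rule sum.mono_neutral_left) (use kk in auto)
            finally show ?thesis by simp
          qed
        qed
        also have "\<dots> = (\<Sum>\<rho>\<in>P. lk (Tm (y - x) \<mu>) \<rho> * lk (Tm x \<rho>) \<nu>)"
        proof (rule sum.cong[OF refl])
          fix \<rho> assume "\<rho> \<in> P"
          have h: "lk (Tm (y - x) \<mu>) \<rho> = (if size \<mu> \<le> size \<rho> then lk (Tm 1 \<mu>) \<rho> * (y - x) ^ (size \<rho> - size \<mu>) else 0)"
            by (rule Tm_hom)
          show "\<tau> \<rho> * (y - x) ^ (size \<rho> - l) = lk (Tm (y - x) \<mu>) \<rho> * lk (Tm x \<rho>) \<nu>"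
            unfolding h \<tau>_def T1_def sz by simp
        qed
        also have "\<dots> = lk (Phi x (Tm (y - x) \<mu>)) \<nu>"
          by (rule lk_Phi[symmetric]) (use finP keys_Tm Pmu in auto)
        also have "\<dots> = lk (Tm y \<mu>) \<nu>" by (simp add: GL)
        also have "\<dots> = (if l \<le> size \<nu> then T1 \<nu> * y ^ K else 0)"
        proof -
          have h: "lk (Tm y \<mu>) \<nu> = (if size \<mu> \<le> size \<nu> then lk (Tm 1 \<mu>) \<nu> * y ^ (size \<nu> - size \<mu>) else 0)"
            by (rule Tm_hom)
          show ?thesis unfolding h T1_def K_def sz ..
        qed
        also have "\<dots> = (\<Sum>j\<le>K. tg j * y ^ j)"
          unfolding tg_def by (simp add: if_distrib[of "\<lambda>t. t * _"] sum.delta' cong: if_cong)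
        finally show ?thesis .
      qed
      then have "\<forall>j\<le>K. Qc j = tg j" using polyfun_eq_coeffs[of Qc K tg] by blast
      then show ?thesis using jK unfolding Qc_def tg_def by blast
    qed
    have "piD a b c d (Fel l f \<mu>) \<nu> z = (\<Sum>\<rho>\<in>P. \<tau> \<rho> * (\<Sum>j\<le>K. g \<rho> j))"
      unfolding LHS by (intro sum.cong refl TERM)
    also have "\<dots> = (\<Sum>j\<le>K. ((deriv ^^ j) f z / pochhammer (of_nat (2 * l)) j) *
        (\<Sum>\<rho>\<in>P. \<tau> \<rho> * (of_nat (size \<rho> - l choose j) * (- x) ^ (size \<rho> - l - j))))"
      unfolding g_def sum_distrib_left by (subst sum.swap) (simp add: mult_ac)
    also have "\<dots> = (\<Sum>j\<le>K. ((deriv ^^ j) f z / pochhammer (of_nat (2 * l)) j) *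
        (if j = K then (if l \<le> size \<nu> then T1 \<nu> else 0) else 0))"
    proof (rule sum.cong[OF refl])
      fix j assume "j \<in> {..K}"
      then have "j \<le> K" by simp
      from Q[OF this] show "(deriv ^^ j) f z / pochhammer (of_nat (2 * l)) j *
        (\<Sum>\<rho>\<in>P. \<tau> \<rho> * (of_nat (size \<rho> - l choose j) * (- x) ^ (size \<rho> - l - j))) =
        (deriv ^^ j) f z / pochhammer (of_nat (2 * l)) j * (if j = K then (if l \<le> size \<nu> then T1 \<nu> else 0) else 0)"
        by (simp only:)
    qed
    also have "\<dots> = (deriv ^^ K) f z / pochhammer (of_nat (2 * l)) K * (if l \<le> size \<nu> then T1 \<nu> else 0)"
      by (simp add: if_distrib[of "\<lambda>t. _ * t"] sum.delta' cong: if_cong)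
    also have "\<dots> = Fel l f \<mu> \<nu> z"
    proof (cases "l \<le> size \<nu>")
      case True2: True
      have "ccoef l \<mu> \<nu> = T1 \<nu> / pochhammer (of_nat (2 * l)) K"
        unfolding T1_def K_def using ccoef_eq[OF pm sz] True True2 by simp
      then show ?thesis using True True2 unfolding Fel_def K_def by simp
    next
      case False
      then show ?thesis unfolding Fel_def by simp
    qed
    finally show ?thesis .
  qed
qed


theorem mainTheorem12:
  fixes l :: nat and f :: "complex \<Rightarrow> complex" and \<mu> :: "nat multiset"
  assumes "1 \<le> l" and "modular_form (2 * l) f"
    and "is_partition \<mu>" and "size \<mu> = l"
  shows "\<forall>a b c d :: int. a * d - b * c = 1 \<longrightarrow>
           (\<forall>\<nu>. \<forall>z\<in>UHP.
              piD (of_int a) (of_int b) (of_int c) (of_int d) (Fel l f \<mu>) \<nu> z = Fel l f \<mu> \<nu> z)"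
proof (intro allI impI ballI)
  fix a b c d :: int and \<nu> z
  assume det: "a * d - b * c = 1" and z: "z \<in> UHP"
  from assms(2) have hol: "f holomorphic_on UHP"
    and mf: "\<forall>a b c d :: int. a * d - b * c = 1 \<longrightarrow>
        (\<forall>z\<in>UHP. f (moeb (of_int a) (of_int b) (of_int c) (of_int d) z)
                    = (of_int c * z + of_int d) ^ (2 * l) * f z)"
    unfolding modular_form_def by auto
  have detr: "(of_int a :: real) * of_int d - of_int b * of_int c = 1"
    using det by (metis of_int_1 of_int_diff of_int_mult)
  have modf: "f (moeb (of_int a) (of_int b) (of_int c) (of_int d) w)
      = (of_real (of_int c) * w + of_real (of_int d)) ^ (2 * l) * f w" if "w \<in> UHP" for w
    using mf det that by simp
  show "piD (of_int a) (of_int b) (of_int c) (of_int d) (Fel l f \<mu>) \<nu> z = Fel l f \<mu> \<nu> z"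
    by (rule main_real[OF detr hol modf assms(1) assms(3) assms(4) z])
qed

end
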